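(* Let $m\ge1$ be an integer and let $\delta>1$ be the positive root of $x^2-(m+1)x-1$. Let $r\in(0,1)$ be rational and suppose its Rényi $\delta$-expansion is purely periodic, $d_\delta(r)=(d_1d_2\cdots d_n)^\omega$ for some $n\ge1$. Then $d_n=0$.
   Context: The Rényi $\delta$-expansion of $x\in[0,1)$ is the greedy expansion $d_\delta(x)=d_1d_2\cdots$ defined by $r_0=x$, $d_{k+1}=\lfloor\delta r_k\rfloor$, $r_{k+1}=\delta r_k-d_{k+1}$, so that $x=\sum_{k\ge1}d_k\delta^{-k}$. For this $\delta$, the digits lie in $\{0,1,\dots,m+1\}$ and the sequences $d_{i+1}d_{i+2}\cdots$ are lexicographically smaller than $((m+1)0)^\omega$ for every $i\ge0$. *)

theory Defs
  imports Complex_Main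
begin

definition renyi_map :: "real \<Rightarrow> real \<Rightarrow> real" where
  "renyi_map \<delta> y = \<delta> * y - of_int \<lfloor>\<delta> * y\<rfloor>"

definition renyi_rem :: "real \<Rightarrow> real \<Rightarrow> nat \<Rightarrow> real" where
  "renyi_rem \<delta> x k = (renyi_map \<delta> ^^ k) x"

text \<open>renyi_digit delta x k is the digit d_k (for k >= 1): d_{k} = floor(delta * r_{k-1}).\<close>
definition renyi_digit :: "real \<Rightarrow> real \<Rightarrow> nat \<Rightarrow> int" where
  "renyi_digit \<delta> x k = \<lfloor>\<delta> * renyi_rem \<delta> x (k - 1)\<rfloor>"

end

theory Submission
  imports Defs
begin

fun pq :: "real \<Rightarrow> real \<Rightarrow> (nat \<Rightarrow> int) \<Rightarrow> nat \<Rightarrow> real \<times> real" where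
  "pq c r D 0 = (0, r)"
| "pq c r D (Suc k) = (c * fst (pq c r D k) + snd (pq c r D k), fst (pq c r D k) - of_int (D (Suc k)))"

lemma rem_Suc: "renyi_rem \<delta> x (Suc k) = \<delta> * renyi_rem \<delta> x k - of_int (renyi_digit \<delta> x (Suc k))"
  by (simp add: renyi_rem_def renyi_digit_def renyi_map_def)

lemma rem_bounds: "0 < x \<Longrightarrow> x < 1 \<Longrightarrow> 0 \<le> renyi_rem \<delta> x k \<and> renyi_rem \<delta> x k < 1"
proof (cases k)
  case (Suc j) then show ?thesis
    by (simp add: renyi_rem_def renyi_map_def) linarith
qed (simp add: renyi_rem_def)

lemma pq_conj:
  assumes "y * y = c * y + 1"
  shows "y * fst (pq c r D k) + snd (pq c r D k) = y * (y * fst (pq c r D (k - 1)) + snd (pq c r D (k - 1))) - of_int (D k) \<or> k = 0"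
proof (cases k)
  case (Suc j)
  have "y * (y * fst (pq c r D j) + snd (pq c r D j)) = (y*y) * fst (pq c r D j) + y * snd (pq c r D j)"
    by (simp add: algebra_simps)
  then show ?thesis using Suc assms by (simp add: algebra_simps)
qed simp

lemma pq_rat: "r \<in> \<rat> \<Longrightarrow> c \<in> \<rat> \<Longrightarrow> fst (pq c r D k) \<in> \<rat> \<and> snd (pq c r D k) \<in> \<rat>"
  by (induction k) auto

lemma delta_irr:
  fixes m :: nat and \<delta> :: real
  assumes "\<delta> > 1" and "\<delta> * \<delta> = (real m + 1) * \<delta> + 1"
  shows "\<delta> \<notin> \<rat>"
proof
  assume "\<delta> \<in> \<rat>"
  then obtain a b where ab: "\<delta> = of_int a / of_int b" "b > 0" "coprime a b"
    by (rule Rats_cases') blast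
  have bn: "(of_int b :: real) \<noteq> 0" using ab by simp
  have "(of_int a / of_int b) * (of_int a / of_int b) = (real m + 1) * (of_int a / of_int b) + (1::real)"
    using assms ab by simp
  then have "(of_int a :: real) * of_int a = (real m + 1) * of_int a * of_int b + of_int b * of_int b"
    using bn by (simp add: field_simps)
  then have "(of_int (a*a) :: real) = of_int ((int m + 1) * a * b + b * b)" by simp
  then have e: "a * a = (int m + 1) * a * b + b * b" by (simp only: of_int_eq_iff)
  then have "a * a = b * ((int m + 1) * a + b)" by (simp add: algebra_simps)
  then have "b dvd a * a" by simp
  moreover have "coprime b (a * a)" using ab(3) by (simp add: coprime_commute)
  ultimately have "b dvd 1" by (meson coprime_common_divisor dvd_refl)
  then have "b = 1" using ab(2) by simp
  then have "\<delta> = of_int a" using ab by simp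
  moreover have "real m + 1 < \<delta>" "\<delta> < real m + 2"
  proof -
    have "\<delta> = real m + 1 + 1 / \<delta>" using assms by (simp add: field_simps)
    moreover have "0 < 1/\<delta>" "1/\<delta> < 1" using assms by auto
    ultimately show "real m + 1 < \<delta>" "\<delta> < real m + 2" by linarith+
  qed
  ultimately have "real_of_int (int m + 1) < real_of_int a" "real_of_int a < real_of_int (int m + 2)" by simp_all
  then have "int m + 1 < a" "a < int m + 2" by (simp_all only: of_int_less_iff)
  then show False by simp
qed

theorem mainTheorem11:
  fixes m n :: nat and \<delta> r :: real
  assumes "m \<ge> 1"
    and "\<delta> > 1" and "\<delta>\<^sup>2 - (real m + 1) * \<delta> - 1 = 0"
    and "r \<in> \<rat>" and "0 < r" and "r < 1"
    and "n \<ge> 1"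
    and "\<forall>k\<ge>1. renyi_digit \<delta> r (k + n) = renyi_digit \<delta> r k"
  shows "renyi_digit \<delta> r n = 0"
proof -
  define R where "R = renyi_rem \<delta> r"
  define D where "D = renyi_digit \<delta> r"
  define c where "c = real m + 1"
  have dd: "\<delta> * \<delta> = c * \<delta> + 1" using assms(3) unfolding c_def by (simp add: power2_eq_square)
  have Rb: "\<And>k. 0 \<le> R k \<and> R k < 1" unfolding R_def using rem_bounds assms(5,6) by blast
  have RS: "\<And>k. R (Suc k) = \<delta> * R k - of_int (D (Suc k))" unfolding R_def D_def by (rule rem_Suc)
  have DR: "\<And>k. D (Suc k) = \<lfloor>\<delta> * R k\<rfloor>" unfolding R_def D_def renyi_digit_def by simp
  have dlt: "\<delta> < c + 1"
  proof -
    have "\<delta> = c + 1 / \<delta>" using dd assms(2) by (simp add: field_simps)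
    moreover have "1/\<delta> < 1" using assms(2) by auto
    ultimately show ?thesis by linarith
  qed
  have Dlo: "\<And>k. 0 \<le> D (Suc k)" using Rb assms(2) DR by simp
  have Dhi: "\<And>k. real_of_int (D (Suc k)) \<le> c"
  proof -
    fix k
    have "\<delta> * R k < \<delta>" using Rb[of k] assms(2) by simp
    then have "real_of_int (D (Suc k)) < c + 1" using DR[of k] dlt by linarith
    moreover have "c = real_of_int (int m + 1)" unfolding c_def by simp
    ultimately have "real_of_int (D (Suc k)) < real_of_int (int m + 1 + 1)" by simp
    then have "D (Suc k) < int m + 1 + 1" by (simp only: of_int_less_iff)
    then have "D (Suc k) \<le> int m + 1" by simp
    then show "real_of_int (D (Suc k)) \<le> c" unfolding c_def by simp
  qed
  have eD: "\<And>k. D (Suc k + n) = D (Suc k)" using spec[OF assms(8), of "Suc k" for k] unfolding D_def by simp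
  have ek: "\<And>k. R (n + k) - R k = \<delta> ^ k * (R n - R 0)"
  proof -
    fix k show "R (n + k) - R k = \<delta> ^ k * (R n - R 0)"
    proof (induction k)
      case (Suc k)
      have "R (n + Suc k) - R (Suc k) = \<delta> * (R (n+k) - R k)"
        using RS[of "n+k"] RS[of k] eD[of k] by (simp add: algebra_simps)
      then show ?case using Suc by simp
    qed simp
  qed
  have Rn: "R n = r"
  proof (rule ccontr)
    assume ne: "R n \<noteq> r"
    have r0: "R 0 = r" unfolding R_def renyi_rem_def by simp
    define e where "e = \<bar>R n - r\<bar>"
    have "e > 0" using ne e_def by simp
    obtain k where k: "1 / e < \<delta> ^ k" using real_arch_pow assms(2) by blast
    have h1: "1 < \<delta> ^ k * e" using k \<open>e>0\<close> by (simp add: field_simps)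
    have h2: "\<delta> ^ k * e = \<bar>R (n+k) - R k\<bar>" using ek[of k] r0 e_def assms(2) by (simp add: abs_mult)
    have h3: "\<bar>R (n+k) - R k\<bar> < 1" using Rb[of "n+k"] Rb[of k] by linarith
    show False using h1 h2 h3 by linarith
  qed
  define P where "P k = pq c r D k" for k
  have RP: "\<And>k. R k = \<delta> * fst (P k) + snd (P k)"
  proof -
    fix k show "R k = \<delta> * fst (P k) + snd (P k)"
    proof (induction k)
      case 0 then show ?case unfolding R_def P_def renyi_rem_def by simp
    next
      case (Suc k)
      have "\<delta> * fst (P (Suc k)) + snd (P (Suc k)) = \<delta> * (\<delta> * fst (P k) + snd (P k)) - of_int (D (Suc k))"
        using pq_conj[OF dd, of r D "Suc k"] unfolding P_def by simp
      then show ?case using Suc RS by simp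
    qed
  qed
  have crat: "c \<in> \<rat>" unfolding c_def by simp
  have Prat: "fst (P n) \<in> \<rat>" "snd (P n) \<in> \<rat>" using pq_rat[OF assms(4) crat] unfolding P_def by auto
  have irr: "\<delta> \<notin> \<rat>" using delta_irr[of \<delta> m] assms(2) dd unfolding c_def by simp
  have P0: "fst (P n) = 0"
  proof (rule ccontr)
    assume "fst (P n) \<noteq> 0"
    then have "\<delta> = (r - snd (P n)) / fst (P n)" using RP[of n] Rn by (simp add: field_simps)
    then have "\<delta> \<in> \<rat>" using Prat assms(4) by simp
    then show False using irr by simp
  qed
  then have Q0: "snd (P n) = r" using RP[of n] Rn by simp
  define y where "y = - 1 / \<delta>"
  have yy: "y * y = c * y + 1"
  proof -
    have "\<delta>*\<delta>*(y*y - c*y - 1) = 1 + c*\<delta> - \<delta>*\<delta>" using assms(2) unfolding y_def by (simp add: field_simps)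
    also have "\<dots> = 0" using dd by simp
    finally show ?thesis using assms(2) by simp
  qed
  define S where "S k = y * fst (P k) + snd (P k)" for k
  have SS: "\<And>k. S (Suc k) = y * S k - of_int (D (Suc k))"
    using pq_conj[OF yy, of r D] unfolding S_def P_def by (metis Suc_neq_Zero diff_Suc_1)
  have inv: "\<And>k. - \<delta> < S k \<and> S k < 1"
  proof -
    fix k show "- \<delta> < S k \<and> S k < 1"
    proof (induction k)
      case 0 then show ?case unfolding S_def P_def using assms(2,5,6) by simp
    next
      case (Suc k)
      have a: "y * S k < 1" using Suc assms(2) unfolding y_def by (simp add: field_simps)
      have b: "y * S k > - 1 / \<delta>" using Suc assms(2) unfolding y_def by (simp add: field_simps)
      have "\<delta> = c + 1 / \<delta>" using dd assms(2) by (simp add: field_simps)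
      then show ?case using SS[of k] a b Dlo[of k] Dhi[of k] by linarith
    qed
  qed
  obtain j where j: "n = Suc j" using assms(7) by (cases n) auto
  have "S n = r" unfolding S_def using P0 Q0 by simp
  moreover have "S n < 1 - of_int (D n)"
  proof -
    have "y * S j < 1" using inv[of j] assms(2) unfolding y_def by (simp add: field_simps)
    then show ?thesis using SS[of j] j by simp
  qed
  ultimately have "real_of_int (D n) < 1" using assms(5) by linarith
  moreover have "0 \<le> D n" using Dlo j by simp
  ultimately show ?thesis unfolding D_def by simp
qed

end
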